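(* Assume the travel times $\tau$ have a convex potential $\Phi$, all externality functions $g_{i,p,j}$ are constant, and let $B$ be a Pareto-minimal budget vector. Then a feasible flow $x\in\mathcal F$ is implementable and respects $B$ if and only if $x$ is an optimal solution of \[ \min_{y\in\mathcal F}\Phi(y)\quad\text{s.t.}\quad G_j(y)\le B_j\ \text{ for all } j\in J. \]
   Context: Let $G=(V,E)$ be a directed graph and $I$ a finite set of commodities; commodity $i$ has source $s_i$, sink $t_i$, demand $d_i>0$; $\mathcal P_i$ is its set of simple $s_i$–$t_i$ paths, $\mathcal P=\{(i,p)\}$. A flow $x\in\mathbb{R}^{\mathcal P}_{\ge0}$ is feasible if $\sum_{p\in\mathcal P_i}x_{i,p}=d_i$ for all $i$; $\mathcal F$ is the set of feasible flows. $J$ is a finite set of externality classes with constant externality factors $g_{i,p,j}\ge0$, $G_j(x)=\sum_{(i,p)}g_{i,p,j}x_{i,p}$; travel times $\tau_{i,p}:\mathcal F\to\mathbb{R}$ with a potential, i.e., a differentiable $\Phi:\mathbb{R}^{\mathcal P}\to\mathbb{R}$ with $\tau_{i,p}(x)=\partial\Phi/\partial x_{i,p}(x)$ on $\mathcal F$, here convex. For $\lambda\in\mathbb{R}^J_{\ge0}$, $c^\lambda_{i,p}=\tau_{i,p}+\sum_j\lambda_jg_{i,p,j}$; $x\in\mathrm{WE}(\lambda)$ means $x\in\mathcal F$ and $x_{i,p}>0$ implies $c^\lambda_{i,p}(x)\le c^\lambda_{i,q}(x)$ for all $q\in\mathcal P_i$. $x$ is implementable if $x\in\mathrm{WE}(\lambda)$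 for some $\lambda\in\mathbb{R}^J_{\ge0}$, and respects $B$ if $G_j(x)\le B_j$ for all $j$. A budget $B$ is feasible if some feasible flow respects it, and Pareto-minimal if it is feasible and no other feasible $B'\ne B$ has $B'_j\le B_j$ for all $j$. *)

theory Defs
  imports "HOL-Analysis.Analysis"
begin

definition simple_path :: "('v \<times> 'v) set \<Rightarrow> 'v \<Rightarrow> 'v \<Rightarrow> 'v list \<Rightarrow> bool" where
  "simple_path E s t p \<longleftrightarrow> p \<noteq> [] \<and> hd p = s \<and> last p = t \<and> distinct p \<and>
     (\<forall>k. Suc k < length p \<longrightarrow> (p ! k, p ! Suc k) \<in> E)"

definition paths :: "('v \<times> 'v) set \<Rightarrow> 'v \<Rightarrow> 'v \<Rightarrow> 'v list set" where
  "paths E s t = {p. simple_path E s t p}"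

definition Paths :: "('v \<times> 'v) set \<Rightarrow> 'i set \<Rightarrow> ('i \<Rightarrow> 'v) \<Rightarrow> ('i \<Rightarrow> 'v) \<Rightarrow> ('i \<times> 'v list) set" where
  "Paths E I s t = {(i, p). i \<in> I \<and> p \<in> paths E (s i) (t i)}"

text \<open>R^P: real vectors indexed by P, represented as functions vanishing outside P.\<close>
definition vecs :: "'a set \<Rightarrow> ('a \<Rightarrow> real) set" where
  "vecs P = {x. \<forall>q. q \<notin> P \<longrightarrow> x q = 0}"

definition feasible_flow ::
  "('v \<times> 'v) set \<Rightarrow> 'i set \<Rightarrow> ('i \<Rightarrow> 'v) \<Rightarrow> ('i \<Rightarrow> 'v) \<Rightarrow> ('i \<Rightarrow> real) \<Rightarrow> ('i \<times> 'v list \<Rightarrow> real) \<Rightarrow> bool" where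
  "feasible_flow E I s t d x \<longleftrightarrow> x \<in> vecs (Paths E I s t) \<and>
     (\<forall>q \<in> Paths E I s t. 0 \<le> x q) \<and>
     (\<forall>i \<in> I. (\<Sum>p \<in> paths E (s i) (t i). x (i, p)) = d i)"

definition Gext :: "('a \<times> 'b) set \<Rightarrow> ('a \<times> 'b \<Rightarrow> 'j \<Rightarrow> real) \<Rightarrow> 'j \<Rightarrow> ('a \<times> 'b \<Rightarrow> real) \<Rightarrow> real" where
  "Gext P g j x = (\<Sum>q \<in> P. g q j * x q)"

definition differentiable_vecs :: "'a set \<Rightarrow> (('a \<Rightarrow> real) \<Rightarrow> real) \<Rightarrow> ('a \<Rightarrow> real) \<Rightarrow> bool" where
  "differentiable_vecs P \<Phi> x \<longleftrightarrow> (\<exists>D. \<forall>\<epsilon>>0. \<exists>\<delta>>0. \<forall>y \<in> vecs P.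
      (\<Sum>q\<in>P. \<bar>y q - x q\<bar>) < \<delta> \<longrightarrow>
      \<bar>\<Phi> y - \<Phi> x - (\<Sum>q\<in>P. D q * (y q - x q))\<bar> \<le> \<epsilon> * (\<Sum>q\<in>P. \<bar>y q - x q\<bar>))"

definition has_partial_deriv :: "(('a \<Rightarrow> real) \<Rightarrow> real) \<Rightarrow> 'a \<Rightarrow> ('a \<Rightarrow> real) \<Rightarrow> real \<Rightarrow> bool" where
  "has_partial_deriv \<Phi> q x v \<longleftrightarrow> ((\<lambda>h. \<Phi> (x(q := x q + h))) has_real_derivative v) (at 0)"

definition convex_vecs :: "'a set \<Rightarrow> (('a \<Rightarrow> real) \<Rightarrow> real) \<Rightarrow> bool" where
  "convex_vecs P \<Phi> \<longleftrightarrow> (\<forall>x \<in> vecs P. \<forall>y \<in> vecs P. \<forall>u::real. 0 \<le> u \<and> u \<le> 1 \<longrightarrow>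
      \<Phi> (\<lambda>q. u * x q + (1 - u) * y q) \<le> u * \<Phi> x + (1 - u) * \<Phi> y)"

definition cost :: "'j set \<Rightarrow> ('q \<Rightarrow> ('q \<Rightarrow> real) \<Rightarrow> real) \<Rightarrow> ('q \<Rightarrow> 'j \<Rightarrow> real) \<Rightarrow> ('j \<Rightarrow> real)
     \<Rightarrow> 'q \<Rightarrow> ('q \<Rightarrow> real) \<Rightarrow> real" where
  "cost J \<tau> g lam q x = \<tau> q x + (\<Sum>j \<in> J. lam j * g q j)"

definition WE where
  "WE E I s t d J \<tau> g lam x \<longleftrightarrow> feasible_flow E I s t d x \<and>
     (\<forall>i \<in> I. \<forall>p \<in> paths E (s i) (t i). x (i, p) > 0 \<longrightarrow>
        (\<forall>p' \<in> paths E (s i) (t i). cost J \<tau> g lam (i, p) x \<le> cost J \<tau> g lam (i, p') x))"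

definition implementable where
  "implementable E I s t d J \<tau> g x \<longleftrightarrow>
     (\<exists>lam. (\<forall>j \<in> J. 0 \<le> lam j) \<and> WE E I s t d J \<tau> g lam x)"

definition respects_budget where
  "respects_budget E I s t J g B x \<longleftrightarrow> (\<forall>j \<in> J. Gext (Paths E I s t) g j x \<le> B j)"

definition feasible_budget where
  "feasible_budget E I s t d J g B \<longleftrightarrow> (\<exists>x. feasible_flow E I s t d x \<and> respects_budget E I s t J g B x)"

text \<open>Budgets are vectors in R^J; only their components on J matter.\<close>
definition pareto_minimal where
  "pareto_minimal E I s t d J g B \<longleftrightarrow> feasible_budget E I s t d J g B \<and>
     \<not> (\<exists>B'. feasible_budget E I s t d J g B' \<and> (\<exists>j \<in> J. B' j \<noteq> B j) \<and> (\<forall>j \<in> J. B' j \<le> B j))"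

definition optimal_budget_solution where
  "optimal_budget_solution E I s t d J g B \<Phi> x \<longleftrightarrow>
     feasible_flow E I s t d x \<and> respects_budget E I s t J g B x \<and>
     (\<forall>y. feasible_flow E I s t d y \<and> respects_budget E I s t J g B y \<longrightarrow> \<Phi> x \<le> \<Phi> y)"

end

theory Submission
  imports Defs
begin

lemma sum_lin1:
  fixes f g z :: "'q \<Rightarrow> real"
  shows "(\<Sum>q\<in>P. (f q - g q * r) * z q) = (\<Sum>q\<in>P. f q * z q) - r * (\<Sum>q\<in>P. g q * z q)"
proof -
  have "(\<Sum>q\<in>P. (f q - g q * r) * z q) = (\<Sum>q\<in>P. f q * z q - r * (g q * z q))"
    by (intro sum.cong) (auto simp: algebra_simps)
  thus ?thesis by (simp add: sum_subtractf sum_distrib_left)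
qed

lemma sum_lin2:
  fixes f w z :: "'q \<Rightarrow> real"
  shows "(\<Sum>q\<in>P. f q * (z q - r * w q)) = (\<Sum>q\<in>P. f q * z q) - r * (\<Sum>q\<in>P. f q * w q)"
  by (simp add: right_diff_distrib sum_subtractf sum_distrib_left mult_ac)

lemma farkas:
  fixes a :: "'k \<Rightarrow> 'q \<Rightarrow> real" and c :: "'q \<Rightarrow> real"
  assumes "finite K" and finP: "finite P"
    and "\<forall>z. (\<forall>k\<in>K. 0 \<le> (\<Sum>q\<in>P. a k q * z q)) \<longrightarrow> 0 \<le> (\<Sum>q\<in>P. c q * z q)"
  shows "\<exists>l. (\<forall>k\<in>K. 0 \<le> l k) \<and> (\<forall>q\<in>P. c q = (\<Sum>k\<in>K. l k * a k q))"
  using assms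
proof (induction K arbitrary: c a rule: finite_induct)
  case empty
  have "0 \<le> (\<Sum>q\<in>P. c q * (- c q))" using empty by (metis empty_iff)
  hence "(\<Sum>q\<in>P. c q * c q) \<le> 0" by (simp add: sum_negf)
  moreover have "(\<Sum>q\<in>P. c q * c q) \<ge> 0" by (simp add: sum_nonneg)
  ultimately have "(\<Sum>q\<in>P. c q * c q) = 0" by linarith
  hence "\<forall>q\<in>P. c q = 0"
    using sum_nonneg_eq_0_iff[OF finP, of "\<lambda>q. c q * c q"] by simp
  then show ?case by auto
next
  case (insert k K)
  show ?case
  proof (cases "\<forall>z. (\<forall>k'\<in>K. 0 \<le> (\<Sum>q\<in>P. a k' q * z q)) \<longrightarrow> 0 \<le> (\<Sum>q\<in>P. c q * z q)")
    case True
    from insert.IH[OF finP True] obtain l where l: "\<forall>k\<in>K. 0 \<le> l k" "\<forall>q\<in>P. c q = (\<Sum>k\<in>K. l k * a k q)" by blast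
    define l' where "l' = l(k := 0)"
    have "\<forall>q\<in>P. c q = (\<Sum>k'\<in>insert k K. l' k' * a k' q)"
    proof
      fix q assume "q \<in> P"
      have "(\<Sum>k'\<in>insert k K. l' k' * a k' q) = (\<Sum>k'\<in>K. l' k' * a k' q)"
        using insert.hyps by (simp add: l'_def)
      also have "\<dots> = (\<Sum>k'\<in>K. l k' * a k' q)"
        using insert.hyps by (intro sum.cong) (auto simp: l'_def)
      finally show "c q = (\<Sum>k'\<in>insert k K. l' k' * a k' q)" using l \<open>q \<in> P\<close> by simp
    qed
    moreover have "\<forall>k'\<in>insert k K. 0 \<le> l' k'" using l by (auto simp: l'_def)
    ultimately show ?thesis by blast
  next
    case False
    then obtain x0 where x0: "\<forall>k'\<in>K. 0 \<le> (\<Sum>q\<in>P. a k' q * x0 q)" "(\<Sum>q\<in>P. c q * x0 q) < 0"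
      by force
    define m where "m = (\<Sum>q\<in>P. a k q * x0 q)"
    have mneg: "m < 0"
    proof (rule ccontr)
      assume "\<not> m < 0"
      hence "\<forall>k'\<in>insert k K. 0 \<le> (\<Sum>q\<in>P. a k' q * x0 q)" using x0 m_def by auto
      hence "0 \<le> (\<Sum>q\<in>P. c q * x0 q)" using insert.prems by blast
      thus False using x0 by simp
    qed
    define a' where "a' = (\<lambda>k' q. a k' q - a k q * ((\<Sum>r\<in>P. a k' r * x0 r) / m))"
    define cx where "cx = (\<Sum>r\<in>P. c r * x0 r)"
    define c' where "c' = (\<lambda>q. c q - a k q * (cx / m))"
    have hyp: "\<forall>z. (\<forall>k'\<in>K. 0 \<le> (\<Sum>q\<in>P. a' k' q * z q)) \<longrightarrow> 0 \<le> (\<Sum>q\<in>P. c' q * z q)"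
    proof (intro allI impI)
      fix z assume z: "\<forall>k'\<in>K. 0 \<le> (\<Sum>q\<in>P. a' k' q * z q)"
      define t where "t = (\<Sum>q\<in>P. a k q * z q) / m"
      define z' where "z' = (\<lambda>q. z q - t * x0 q)"
      have e1: "(\<Sum>q\<in>P. a k' q * z' q) = (\<Sum>q\<in>P. a' k' q * z q)" for k'
        unfolding z'_def a'_def sum_lin1 sum_lin2 t_def by (simp add: field_simps)
      have e2: "(\<Sum>q\<in>P. a k q * z' q) = 0"
        unfolding z'_def sum_lin2 t_def using mneg by (simp add: m_def[symmetric])
      have e3: "(\<Sum>q\<in>P. c q * z' q) = (\<Sum>q\<in>P. c' q * z q)"
        unfolding z'_def c'_def sum_lin1 sum_lin2 t_def cx_def by (simp add: field_simps)
      have "\<forall>k'\<in>insert k K. 0 \<le> (\<Sum>q\<in>P. a k' q * z' q)" using z e1 e2 by auto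
      hence "0 \<le> (\<Sum>q\<in>P. c q * z' q)" using insert.prems by blast
      thus "0 \<le> (\<Sum>q\<in>P. c' q * z q)" using e3 by simp
    qed
    from insert.IH[OF finP hyp] obtain l where l: "\<forall>k\<in>K. 0 \<le> l k" "\<forall>q\<in>P. c' q = (\<Sum>k\<in>K. l k * a' k q)" by blast
    define S where "S = (\<Sum>k'\<in>K. l k' * (\<Sum>r\<in>P. a k' r * x0 r))"
    define mu where "mu = (cx - S) / m"
    have "S \<ge> 0" unfolding S_def using l(1) x0(1) by (intro sum_nonneg) auto
    hence "cx - S < 0" using x0(2) cx_def by simp
    hence mu0: "mu \<ge> 0" unfolding mu_def using mneg by (simp add: divide_nonpos_neg)
    define l' where "l' = l(k := mu)"
    have "\<forall>q\<in>P. c q = (\<Sum>k'\<in>insert k K. l' k' * a k' q)"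
    proof
      fix q assume q: "q \<in> P"
      have "(\<Sum>k'\<in>insert k K. l' k' * a k' q) = mu * a k q + (\<Sum>k'\<in>K. l' k' * a k' q)"
        using insert.hyps by (simp add: l'_def)
      also have "(\<Sum>k'\<in>K. l' k' * a k' q) = (\<Sum>k'\<in>K. l k' * a k' q)"
        using insert.hyps by (intro sum.cong) (auto simp: l'_def)
      also have "(\<Sum>k'\<in>K. l k' * a k' q) = (\<Sum>k'\<in>K. l k' * a' k' q) + a k q * S / m"
        unfolding a'_def S_def
        by (simp add: right_diff_distrib sum_subtractf sum_distrib_left sum_divide_distrib mult_ac)
      also have "(\<Sum>k'\<in>K. l k' * a' k' q) = c' q" using l q by simp
      finally show "c q = (\<Sum>k'\<in>insert k K. l' k' * a k' q)"
        unfolding c'_def mu_def using mneg by (simp add: field_simps)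
    qed
    moreover have "\<forall>k'\<in>insert k K. 0 \<le> l' k'" using l mu0 by (auto simp: l'_def)
    ultimately show ?thesis by blast
  qed
qed


definition dwit :: "'a set \<Rightarrow> (('a \<Rightarrow> real) \<Rightarrow> real) \<Rightarrow> ('a \<Rightarrow> real) \<Rightarrow> ('a \<Rightarrow> real) \<Rightarrow> bool" where
  "dwit P \<Phi> x D \<longleftrightarrow> (\<forall>\<epsilon>>0. \<exists>\<delta>>0. \<forall>y \<in> vecs P.
      (\<Sum>q\<in>P. \<bar>y q - x q\<bar>) < \<delta> \<longrightarrow>
      \<bar>\<Phi> y - \<Phi> x - (\<Sum>q\<in>P. D q * (y q - x q))\<bar> \<le> \<epsilon> * (\<Sum>q\<in>P. \<bar>y q - x q\<bar>))"

lemma dwit_partial: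
  assumes fin: "finite P" and xv: "x \<in> vecs P" and q: "q \<in> P" and D: "dwit P \<Phi> x D"
  shows "((\<lambda>h. \<Phi> (x(q := x q + h))) has_real_derivative D q) (at 0)"
proof -
  have N: "(\<Sum>r\<in>P. \<bar>(x(q := x q + h)) r - x r\<bar>) = \<bar>h\<bar>" for h
  proof -
    have "(\<Sum>r\<in>P. \<bar>(x(q := x q + h)) r - x r\<bar>) = (\<Sum>r\<in>P. if r = q then \<bar>h\<bar> else 0)"
      by (intro sum.cong) auto
    thus ?thesis using fin q by simp
  qed
  have L: "(\<Sum>r\<in>P. D r * ((x(q := x q + h)) r - x r)) = D q * h" for h
  proof -
    have "(\<Sum>r\<in>P. D r * ((x(q := x q + h)) r - x r)) = (\<Sum>r\<in>P. if r = q then D q * h else 0)"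
      by (intro sum.cong) auto
    thus ?thesis using fin q by simp
  qed
  have vv: "x(q := x q + h) \<in> vecs P" for h using xv q unfolding vecs_def by auto
  show ?thesis
    unfolding has_field_derivative_iff
  proof (rule LIM_I)
    fix r :: real assume r: "0 < r"
    obtain \<delta> where d: "\<delta> > 0" and dd: "\<forall>y \<in> vecs P.
      (\<Sum>q\<in>P. \<bar>y q - x q\<bar>) < \<delta> \<longrightarrow>
      \<bar>\<Phi> y - \<Phi> x - (\<Sum>q\<in>P. D q * (y q - x q))\<bar> \<le> (r/2) * (\<Sum>q\<in>P. \<bar>y q - x q\<bar>)"
      using D r unfolding dwit_def by (meson half_gt_zero)
    show "\<exists>s>0. \<forall>h. h \<noteq> 0 \<and> norm (h - 0) < s \<longrightarrow>
        norm ((\<Phi> (x(q := x q + h)) - \<Phi> (x(q := x q + 0))) / (h - 0) - D q) < r"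
    proof (intro exI[of _ \<delta>] conjI allI impI d)
      fix h :: real assume h: "h \<noteq> 0 \<and> norm (h - 0) < \<delta>"
      have "\<bar>\<Phi> (x(q := x q + h)) - \<Phi> x - D q * h\<bar> \<le> (r/2) * \<bar>h\<bar>"
        using dd[rule_format, OF vv[of h]] h N[of h] L[of h] by simp
      moreover have "(\<Phi> (x(q := x q + h)) - \<Phi> x) / h - D q = (\<Phi> (x(q := x q + h)) - \<Phi> x - D q * h) / h"
        using h by (simp add: field_simps)
      ultimately have "\<bar>(\<Phi> (x(q := x q + h)) - \<Phi> x) / h - D q\<bar> \<le> r/2"
        using h by (simp add: abs_divide divide_le_eq)
      thus "norm ((\<Phi> (x(q := x q + h)) - \<Phi> (x(q := x q + 0))) / (h - 0) - D q) < r"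
        using r by simp
    qed
  qed
qed

lemma dwit_dir:
  assumes fin: "finite P" and xv: "x \<in> vecs P" and yv: "y \<in> vecs P" and D: "dwit P \<Phi> x D"
    and e: "\<epsilon> > 0"
  shows "\<exists>u. 0 < u \<and> u \<le> 1 \<and>
    \<bar>\<Phi> (\<lambda>q. u * y q + (1 - u) * x q) - \<Phi> x - u * (\<Sum>q\<in>P. D q * (y q - x q))\<bar>
      \<le> \<epsilon> * u * (\<Sum>q\<in>P. \<bar>y q - x q\<bar>)"
proof -
  obtain \<delta> where d: "\<delta> > 0" and dd: "\<forall>z \<in> vecs P.
      (\<Sum>q\<in>P. \<bar>z q - x q\<bar>) < \<delta> \<longrightarrow>
      \<bar>\<Phi> z - \<Phi> x - (\<Sum>q\<in>P. D q * (z q - x q))\<bar> \<le> \<epsilon> * (\<Sum>q\<in>P. \<bar>z q - x q\<bar>)"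
    using D e unfolding dwit_def by blast
  define N where "N = (\<Sum>q\<in>P. \<bar>y q - x q\<bar>)"
  have N0: "N \<ge> 0" unfolding N_def by (simp add: sum_nonneg)
  define u where "u = min 1 (\<delta> / (2 * (N + 1)))"
  have u0: "u > 0" unfolding u_def using d N0 by simp
  have u1: "u \<le> 1" unfolding u_def by simp
  have "u * N \<le> (\<delta> / (2 * (N + 1))) * N" unfolding u_def using N0 by (intro mult_right_mono) auto
  also have "\<dots> < \<delta>"
  proof -
    have "\<delta> * N < \<delta> * (2 * (N + 1))" using d N0 by (intro mult_strict_left_mono) auto
    thus ?thesis using N0 by (simp add: field_simps)
  qed
  finally have uN: "u * N < \<delta>" .
  define z where "z = (\<lambda>q. u * y q + (1 - u) * x q)"
  have zv: "z \<in> vecs P" using xv yv unfolding vecs_def z_def by auto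
  have zx: "z q - x q = u * (y q - x q)" for q unfolding z_def by (simp add: algebra_simps)
  have Nz: "(\<Sum>q\<in>P. \<bar>z q - x q\<bar>) = u * N"
    unfolding zx N_def using u0 by (simp add: abs_mult sum_distrib_left)
  have Lz: "(\<Sum>q\<in>P. D q * (z q - x q)) = u * (\<Sum>q\<in>P. D q * (y q - x q))"
    unfolding zx by (simp add: sum_distrib_left mult_ac)
  have "\<bar>\<Phi> z - \<Phi> x - u * (\<Sum>q\<in>P. D q * (y q - x q))\<bar> \<le> \<epsilon> * (u * N)"
    using dd[rule_format, OF zv] Nz Lz uN by simp
  thus ?thesis using u0 u1 unfolding z_def N_def by (intro exI[of _ u]) (simp add: mult_ac)
qed

lemma eps_le:
  fixes a N :: real
  assumes "N \<ge> 0" and "\<And>\<epsilon>. \<epsilon> > 0 \<Longrightarrow> a \<ge> - \<epsilon> * N"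
  shows "a \<ge> 0"
proof (rule ccontr)
  assume "\<not> a \<ge> 0"
  hence a: "a < 0" by simp
  define \<epsilon> where "\<epsilon> = - a / (2 * (N + 1))"
  have e: "\<epsilon> > 0" unfolding \<epsilon>_def using a assms(1) by (intro divide_pos_pos) auto
  have "\<epsilon> * N \<le> \<epsilon> * (N + 1)" using e by simp
  also have "\<epsilon> * (N + 1) = - a / 2" unfolding \<epsilon>_def using assms(1) by (simp add: field_simps)
  finally have "a \<ge> a / 2" using assms(2)[OF e] by linarith
  thus False using a by linarith
qed

lemma dwit_convex:
  assumes fin: "finite P" and xv: "x \<in> vecs P" and yv: "y \<in> vecs P" and D: "dwit P \<Phi> x D"
    and cv: "convex_vecs P \<Phi>"
  shows "(\<Sum>q\<in>P. D q * (y q - x q)) \<le> \<Phi> y - \<Phi> x"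
proof -
  define N where "N = (\<Sum>q\<in>P. \<bar>y q - x q\<bar>)"
  have N0: "N \<ge> 0" unfolding N_def by (simp add: sum_nonneg)
  have "\<Phi> y - \<Phi> x - (\<Sum>q\<in>P. D q * (y q - x q)) \<ge> 0"
  proof (rule eps_le[OF N0])
    fix \<epsilon> :: real assume e: "\<epsilon> > 0"
    obtain u where u: "0 < u" "u \<le> 1" and
      b: "\<bar>\<Phi> (\<lambda>q. u * y q + (1 - u) * x q) - \<Phi> x - u * (\<Sum>q\<in>P. D q * (y q - x q))\<bar> \<le> \<epsilon> * u * N"
      using dwit_dir[OF fin xv yv D e] unfolding N_def by blast
    have c: "\<Phi> (\<lambda>q. u * y q + (1 - u) * x q) \<le> u * \<Phi> y + (1 - u) * \<Phi> x"
      using cv yv xv u unfolding convex_vecs_def by auto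
    have "u * (\<Phi> y - \<Phi> x - (\<Sum>q\<in>P. D q * (y q - x q))) \<ge> u * (- \<epsilon> * N)"
      using b c by (simp add: algebra_simps abs_le_iff)
    thus "\<Phi> y - \<Phi> x - (\<Sum>q\<in>P. D q * (y q - x q)) \<ge> - \<epsilon> * N"
      using u(1) by (metis mult_le_cancel_left_pos)
  qed
  thus ?thesis by simp
qed

lemma dwit_min:
  assumes fin: "finite P" and xv: "x \<in> vecs P" and yv: "y \<in> vecs P" and D: "dwit P \<Phi> x D"
    and mn: "\<And>u. 0 < u \<Longrightarrow> u \<le> 1 \<Longrightarrow> \<Phi> x \<le> \<Phi> (\<lambda>q. u * y q + (1 - u) * x q)"
  shows "(\<Sum>q\<in>P. D q * (y q - x q)) \<ge> 0"
proof -
  define N where "N = (\<Sum>q\<in>P. \<bar>y q - x q\<bar>)"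
  have N0: "N \<ge> 0" unfolding N_def by (simp add: sum_nonneg)
  show ?thesis
  proof (rule eps_le[OF N0])
    fix \<epsilon> :: real assume e: "\<epsilon> > 0"
    obtain u where u: "0 < u" "u \<le> 1" and
      b: "\<bar>\<Phi> (\<lambda>q. u * y q + (1 - u) * x q) - \<Phi> x - u * (\<Sum>q\<in>P. D q * (y q - x q))\<bar> \<le> \<epsilon> * u * N"
      using dwit_dir[OF fin xv yv D e] unfolding N_def by blast
    have "u * (\<Sum>q\<in>P. D q * (y q - x q)) \<ge> u * (- \<epsilon> * N)"
      using b mn[OF u] by (simp add: algebra_simps abs_le_iff)
    thus "(\<Sum>q\<in>P. D q * (y q - x q)) \<ge> - \<epsilon> * N"
      using u(1) by (metis mult_le_cancel_left_pos)
  qed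
qed


lemma simple_path_set:
  assumes sp: "simple_path E s t p" and sV: "s \<in> V" and EV: "E \<subseteq> V \<times> V"
  shows "set p \<subseteq> V"
proof
  fix v assume "v \<in> set p"
  then obtain k where k: "k < length p" "v = p ! k" by (auto simp: in_set_conv_nth)
  from sp have ne: "p \<noteq> []" and hd: "hd p = s" and ed: "\<forall>k. Suc k < length p \<longrightarrow> (p ! k, p ! Suc k) \<in> E"
    unfolding simple_path_def by auto
  show "v \<in> V"
  proof (cases "Suc k < length p")
    case True thus ?thesis using ed EV k by auto
  next
    case False
    show ?thesis
    proof (cases k)
      case 0 thus ?thesis using hd ne k sV by (simp add: hd_conv_nth)
    next
      case (Suc k') 
      hence "(p ! k', p ! Suc k') \<in> E" using ed k by auto
      thus ?thesis using EV k Suc by auto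
    qed
  qed
qed

lemma finite_paths:
  assumes finV: "finite V" and EV: "E \<subseteq> V \<times> V" and sV: "s \<in> V"
  shows "finite (paths E s t)"
proof -
  have "paths E s t \<subseteq> {xs. set xs \<subseteq> V \<and> length xs \<le> card V}"
  proof
    fix p assume "p \<in> paths E s t"
    hence sp: "simple_path E s t p" unfolding paths_def by simp
    hence st: "set p \<subseteq> V" using simple_path_set[OF sp sV EV] by simp
    have "distinct p" using sp unfolding simple_path_def by simp
    hence "length p = card (set p)" by (simp add: distinct_card)
    also have "\<dots> \<le> card V" using st finV by (simp add: card_mono)
    finally show "p \<in> {xs. set xs \<subseteq> V \<and> length xs \<le> card V}" using st by simp
  qed
  thus ?thesis using finite_lists_length_le[OF finV] by (rule finite_subset)
qed

lemma Paths_Sigma: "Paths E I s t = Sigma I (\<lambda>i. paths E (s i) (t i))"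
  unfolding Paths_def by auto

lemma sum_Paths:
  assumes "finite I" "\<forall>i\<in>I. finite (paths E (s i) (t i))"
  shows "(\<Sum>q\<in>Paths E I s t. f q) = (\<Sum>i\<in>I. \<Sum>p\<in>paths E (s i) (t i). f (i, p))"
  unfolding Paths_Sigma using assms by (simp add: sum.Sigma)

lemma comb_feasible:
  assumes "feasible_flow E I s t d x" "feasible_flow E I s t d y" "0 \<le> u" "u \<le> 1"
  shows "feasible_flow E I s t d (\<lambda>q. u * y q + (1 - u) * x q)"
  using assms unfolding feasible_flow_def vecs_def
  by (auto simp: sum.distrib sum_distrib_left[symmetric]; simp add: algebra_simps)

lemma Gext_comb:
  "Gext P g j (\<lambda>q. u * y q + (1 - u) * x q) = u * Gext P g j y + (1 - u) * Gext P g j x"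
proof -
  have "g q j * (u * y q + (1 - u) * x q) = u * (g q j * y q) + (1 - u) * (g q j * x q)" for q
    by (simp add: algebra_simps)
  thus ?thesis unfolding Gext_def by (simp add: sum.distrib sum_distrib_left)
qed

lemma comb_respects:
  assumes "respects_budget E I s t J g B x" "respects_budget E I s t J g B y" "0 \<le> u" "u \<le> 1"
  shows "respects_budget E I s t J g B (\<lambda>q. u * y q + (1 - u) * x q)"
  unfolding respects_budget_def Gext_comb
proof
  fix j assume j: "j \<in> J"
  have "u * Gext (Paths E I s t) g j y \<le> u * B j" using assms j unfolding respects_budget_def
    by (intro mult_left_mono) auto
  moreover have "(1 - u) * Gext (Paths E I s t) g j x \<le> (1 - u) * B j" using assms j unfolding respects_budget_def
    by (intro mult_left_mono) auto
  ultimately show "u * Gext (Paths E I s t) g j y + (1 - u) * Gext (Paths E I s t) g j x \<le> B j"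
    by (simp add: algebra_simps)
qed

lemma WE_vi:
  fixes c x y :: "'i \<times> 'p \<Rightarrow> real"
  assumes finI: "finite I" and finpa: "\<forall>i\<in>I. finite (pa i)"
    and nn: "\<forall>i\<in>I. \<forall>p\<in>pa i. 0 \<le> x (i, p) \<and> 0 \<le> y (i, p)"
    and sums: "\<forall>i\<in>I. (\<Sum>p\<in>pa i. x (i, p)) = d i \<and> (\<Sum>p\<in>pa i. y (i, p)) = d i"
    and dpos: "\<forall>i\<in>I. 0 < d i"
    and we: "\<forall>i\<in>I. \<forall>p\<in>pa i. x (i, p) > 0 \<longrightarrow> (\<forall>p'\<in>pa i. c (i, p) \<le> c (i, p'))"
  shows "0 \<le> (\<Sum>i\<in>I. \<Sum>p\<in>pa i. c (i, p) * (y (i, p) - x (i, p)))"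
proof (rule sum_nonneg)
  fix i assume i: "i \<in> I"
  obtain p0 where p0: "p0 \<in> pa i" "x (i, p0) > 0"
  proof (rule ccontr)
    assume "\<not> thesis"
    with that have "\<forall>p\<in>pa i. x (i, p) = 0" using nn i by force
    hence "(\<Sum>p\<in>pa i. x (i, p)) = 0" by simp
    thus False using sums dpos i by auto
  qed
  define m where "m = c (i, p0)"
  have h1: "c (i, p) * x (i, p) = m * x (i, p)" if p: "p \<in> pa i" for p
  proof (cases "x (i, p) > 0")
    case True
    have "c (i, p) \<le> c (i, p0)" using we i p True p0 by blast
    moreover have "c (i, p0) \<le> c (i, p)" using we i p p0 by blast
    ultimately show ?thesis unfolding m_def by simp
  next
    case False
    hence "x (i, p) = 0" using nn i p by force
    thus ?thesis by simp
  qed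
  have h2: "m * y (i, p) \<le> c (i, p) * y (i, p)" if p: "p \<in> pa i" for p
    using we i p p0 nn unfolding m_def by (intro mult_right_mono) auto
  have "(\<Sum>p\<in>pa i. c (i, p) * (y (i, p) - x (i, p)))
      = (\<Sum>p\<in>pa i. c (i, p) * y (i, p)) - (\<Sum>p\<in>pa i. c (i, p) * x (i, p))"
    by (simp add: right_diff_distrib sum_subtractf)
  also have "(\<Sum>p\<in>pa i. c (i, p) * x (i, p)) = (\<Sum>p\<in>pa i. m * x (i, p))"
    using h1 by (intro sum.cong) auto
  also have "\<dots> = m * d i" using sums i by (simp add: sum_distrib_left[symmetric])
  finally have e1: "(\<Sum>p\<in>pa i. c (i, p) * (y (i, p) - x (i, p)))
      = (\<Sum>p\<in>pa i. c (i, p) * y (i, p)) - m * d i" .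
  have "(\<Sum>p\<in>pa i. c (i, p) * y (i, p)) \<ge> (\<Sum>p\<in>pa i. m * y (i, p))"
    using h2 by (intro sum_mono) auto
  moreover have "(\<Sum>p\<in>pa i. m * y (i, p)) = m * d i" using sums i by (simp add: sum_distrib_left[symmetric])
  ultimately show "0 \<le> (\<Sum>p\<in>pa i. c (i, p) * (y (i, p) - x (i, p)))" using e1 by simp
qed

datatype ('q, 'i, 'j) con = Cpos 'q | Cplus 'i | Cminus 'i | Cbud 'j

fun acon :: "('i \<times> 'b \<Rightarrow> 'j \<Rightarrow> real) \<Rightarrow> ('i \<times> 'b, 'i, 'j) con \<Rightarrow> 'i \<times> 'b \<Rightarrow> real" where
  "acon g (Cpos r) q = (if q = r then 1 else 0)"
| "acon g (Cplus i) q = (if fst q = i then 1 else 0)"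
| "acon g (Cminus i) q = (if fst q = i then -1 else 0)"
| "acon g (Cbud j) q = - g q j"

lemma acon_decomp:
  fixes l :: "('i \<times> 'b, 'i, 'j) con \<Rightarrow> real"
  assumes "finite Z" "finite I" "finite J" "fst q \<in> I"
  shows "(\<Sum>k\<in>Cpos ` Z \<union> Cplus ` I \<union> Cminus ` I \<union> Cbud ` J. l k * acon g k q)
    = (if q \<in> Z then l (Cpos q) else 0) + l (Cplus (fst q)) - l (Cminus (fst q))
      - (\<Sum>j\<in>J. l (Cbud j) * g q j)"
proof -
  have d1: "(Cpos ` Z \<union> Cplus ` I \<union> Cminus ` I) \<inter> Cbud ` J = {}" by auto
  have d2: "(Cpos ` Z \<union> Cplus ` I) \<inter> Cminus ` I = {}" by auto
  have d3: "Cpos ` Z \<inter> Cplus ` I = {}" by auto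
  have "(\<Sum>k\<in>Cpos ` Z \<union> Cplus ` I \<union> Cminus ` I \<union> Cbud ` J. l k * acon g k q)
    = (\<Sum>k\<in>Cpos ` Z. l k * acon g k q) + (\<Sum>k\<in>Cplus ` I. l k * acon g k q)
      + (\<Sum>k\<in>Cminus ` I. l k * acon g k q) + (\<Sum>k\<in>Cbud ` J. l k * acon g k q)"
    using assms
    by (simp add: sum.union_disjoint[OF _ _ d1] sum.union_disjoint[OF _ _ d2] sum.union_disjoint[OF _ _ d3])
  also have "(\<Sum>k\<in>Cpos ` Z. l k * acon g k q) = (if q \<in> Z then l (Cpos q) else 0)"
    using assms(1) by (simp add: sum.reindex inj_on_def if_distrib sum.delta cong: if_cong)
  also have "(\<Sum>k\<in>Cplus ` I. l k * acon g k q) = l (Cplus (fst q))"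
    using assms(2,4) by (simp add: sum.reindex inj_on_def if_distrib sum.delta' cong: if_cong)
  also have "(\<Sum>k\<in>Cminus ` I. l k * acon g k q) = - l (Cminus (fst q))"
    using assms(2,4) by (simp add: sum.reindex inj_on_def if_distrib sum.delta' cong: if_cong)
  also have "(\<Sum>k\<in>Cbud ` J. l k * acon g k q) = - (\<Sum>j\<in>J. l (Cbud j) * g q j)"
    by (simp add: sum.reindex inj_on_def sum_negf)
  finally show ?thesis by simp
qed


theorem lemma4p4:
  fixes V :: "'v set" and E :: "('v \<times> 'v) set"
    and I :: "'i set" and s t :: "'i \<Rightarrow> 'v" and d :: "'i \<Rightarrow> real"
    and J :: "'j set" and g :: "'i \<times> 'v list \<Rightarrow> 'j \<Rightarrow> real"
    and \<tau> :: "'i \<times> 'v list \<Rightarrow> ('i \<times> 'v list \<Rightarrow> real) \<Rightarrow> real"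
    and \<Phi> :: "('i \<times> 'v list \<Rightarrow> real) \<Rightarrow> real"
    and B :: "'j \<Rightarrow> real"
    and x :: "'i \<times> 'v list \<Rightarrow> real"
  assumes finV: "finite V" and EV: "E \<subseteq> V \<times> V"
    and finI: "finite I" and stV: "\<forall>i \<in> I. s i \<in> V \<and> t i \<in> V"
    and dpos: "\<forall>i \<in> I. 0 < d i"
    and finJ: "finite J"
    and gnn: "\<forall>q \<in> Paths E I s t. \<forall>j \<in> J. 0 \<le> g q j"
    and Phi_diff: "\<forall>y \<in> vecs (Paths E I s t). differentiable_vecs (Paths E I s t) \<Phi> y"
    and Phi_pot: "\<forall>y. feasible_flow E I s t d y \<longrightarrow>
                     (\<forall>q \<in> Paths E I s t. has_partial_deriv \<Phi> q y (\<tau> q y))"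
    and Phi_convex: "convex_vecs (Paths E I s t) \<Phi>"
    and B_pm: "pareto_minimal E I s t d J g B"
    and x_feas: "feasible_flow E I s t d x"
  shows "(implementable E I s t d J \<tau> g x \<and> respects_budget E I s t J g B x) \<longleftrightarrow>
         optimal_budget_solution E I s t d J g B \<Phi> x"
proof -
  define P where "P = Paths E I s t"
  have finpa: "\<forall>i\<in>I. finite (paths E (s i) (t i))" using finite_paths[OF finV EV] stV by blast
  have finP: "finite P" unfolding P_def Paths_Sigma using finI finpa by auto
  have sumP: "(\<Sum>q\<in>P. f q) = (\<Sum>i\<in>I. \<Sum>p\<in>paths E (s i) (t i). f (i, p))" for f :: "_ \<Rightarrow> real"
    unfolding P_def using sum_Paths[OF finI finpa] .
  have inP: "(i, p) \<in> P \<longleftrightarrow> i \<in> I \<and> p \<in> paths E (s i) (t i)" for i p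
    unfolding P_def Paths_def by simp
  have xv: "x \<in> vecs P" and x0: "\<forall>q\<in>P. 0 \<le> x q"
    and xd: "\<forall>i\<in>I. (\<Sum>p\<in>paths E (s i) (t i). x (i, p)) = d i"
    using x_feas unfolding feasible_flow_def P_def by auto
  obtain D where D: "dwit P \<Phi> x D"
    using Phi_diff xv unfolding differentiable_vecs_def dwit_def P_def by blast
  have Dt: "D q = \<tau> q x" if q: "q \<in> P" for q
  proof -
    have "((\<lambda>h. \<Phi> (x(q := x q + h))) has_real_derivative D q) (at 0)"
      using dwit_partial[OF finP xv q D] .
    moreover have "((\<lambda>h. \<Phi> (x(q := x q + h))) has_real_derivative \<tau> q x) (at 0)"
      using Phi_pot x_feas q unfolding P_def has_partial_deriv_def by blast
    ultimately show ?thesis by (rule DERIV_unique)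
  qed
  have DtS: "(\<Sum>q\<in>P. D q * w q) = (\<Sum>q\<in>P. \<tau> q x * w q)" for w
    using Dt by (intro sum.cong) auto
  have yvecs: "y \<in> vecs P" if "feasible_flow E I s t d y" for y
    using that unfolding feasible_flow_def P_def by auto
  show ?thesis
  proof
    assume H: "implementable E I s t d J \<tau> g x \<and> respects_budget E I s t J g B x"
    then obtain lam where lam0: "\<forall>j\<in>J. 0 \<le> lam j" and we: "WE E I s t d J \<tau> g lam x"
      unfolding implementable_def by blast
    have resp: "respects_budget E I s t J g B x" using H by simp
    have GxB: "\<forall>j\<in>J. Gext P g j x = B j"
    proof (rule ccontr)
      assume "\<not> (\<forall>j\<in>J. Gext P g j x = B j)"
      hence ne: "\<exists>j\<in>J. (\<lambda>j. Gext P g j x) j \<noteq> B j" by simp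
      have fb: "feasible_budget E I s t d J g (\<lambda>j. Gext P g j x)"
        unfolding feasible_budget_def respects_budget_def P_def using x_feas by auto
      have le: "\<forall>j\<in>J. (\<lambda>j. Gext P g j x) j \<le> B j" using resp unfolding respects_budget_def P_def by simp
      show False using B_pm fb ne le unfolding pareto_minimal_def by blast
    qed
    show "optimal_budget_solution E I s t d J g B \<Phi> x"
      unfolding optimal_budget_solution_def
    proof (intro conjI allI impI x_feas resp)
      fix y assume y: "feasible_flow E I s t d y \<and> respects_budget E I s t J g B y"
      have yv: "y \<in> vecs P" using y yvecs by blast
      have y0: "\<forall>q\<in>P. 0 \<le> y q" and yd: "\<forall>i\<in>I. (\<Sum>p\<in>paths E (s i) (t i). y (i, p)) = d i"
        using y unfolding feasible_flow_def P_def by auto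
      have conv: "(\<Sum>q\<in>P. \<tau> q x * (y q - x q)) \<le> \<Phi> y - \<Phi> x"
        using dwit_convex[OF finP xv yv D Phi_convex[folded P_def]] DtS by simp
      have vi: "0 \<le> (\<Sum>q\<in>P. cost J \<tau> g lam q x * (y q - x q))"
        unfolding sumP
        apply (rule WE_vi[OF finI finpa, where d=d])
        using x0 y0 inP apply blast
        using xd yd apply blast
        using dpos apply blast
        using we unfolding WE_def by blast
      have split: "(\<Sum>q\<in>P. cost J \<tau> g lam q x * (y q - x q))
          = (\<Sum>q\<in>P. \<tau> q x * (y q - x q)) + (\<Sum>j\<in>J. lam j * (Gext P g j y - Gext P g j x))"
      proof -
        have "(\<Sum>q\<in>P. cost J \<tau> g lam q x * (y q - x q))
            = (\<Sum>q\<in>P. \<tau> q x * (y q - x q)) + (\<Sum>q\<in>P. \<Sum>j\<in>J. lam j * (g q j * (y q - x q)))"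
        proof -
          have "cost J \<tau> g lam q x * (y q - x q) = \<tau> q x * (y q - x q) + (\<Sum>j\<in>J. lam j * (g q j * (y q - x q)))" for q
            unfolding cost_def by (simp add: distrib_left sum_distrib_left mult_ac)
          thus ?thesis by (simp add: sum.distrib)
        qed
        also have "(\<Sum>q\<in>P. \<Sum>j\<in>J. lam j * (g q j * (y q - x q))) = (\<Sum>j\<in>J. \<Sum>q\<in>P. lam j * (g q j * (y q - x q)))"
          by (rule sum.swap)
        also have "\<dots> = (\<Sum>j\<in>J. lam j * (Gext P g j y - Gext P g j x))"
          unfolding Gext_def
          by (simp add: sum_distrib_left[symmetric] right_diff_distrib sum_subtractf)
        finally show ?thesis .
      qed
      have bud: "(\<Sum>j\<in>J. lam j * (Gext P g j y - Gext P g j x)) \<le> 0"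
      proof (rule sum_nonpos)
        fix j assume j: "j \<in> J"
        have "Gext P g j y \<le> B j" using y j unfolding respects_budget_def P_def by auto
        thus "lam j * (Gext P g j y - Gext P g j x) \<le> 0"
          using GxB j lam0 by (simp add: mult_nonneg_nonpos)
      qed
      show "\<Phi> x \<le> \<Phi> y" using conv vi split bud by linarith
    qed
  next
    assume opt: "optimal_budget_solution E I s t d J g B \<Phi> x"
    have resp: "respects_budget E I s t J g B x" using opt unfolding optimal_budget_solution_def by simp
    have grad: "0 \<le> (\<Sum>q\<in>P. \<tau> q x * (y q - x q))"
      if y: "feasible_flow E I s t d y" "respects_budget E I s t J g B y" for y
    proof -
      have "(\<Sum>q\<in>P. D q * (y q - x q)) \<ge> 0"
      proof (rule dwit_min[OF finP xv yvecs[OF y(1)] D])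
        fix u :: real assume u: "0 < u" "u \<le> 1"
        show "\<Phi> x \<le> \<Phi> (\<lambda>q. u * y q + (1 - u) * x q)"
          using opt comb_feasible[OF x_feas y(1)] comb_respects[OF resp y(2)] u
          unfolding optimal_budget_solution_def by auto
      qed
      thus ?thesis using DtS by simp
    qed
    define Z where "Z = {q\<in>P. x q = 0}"
    define K where "K = Cpos ` Z \<union> Cplus ` I \<union> Cminus ` I \<union> Cbud ` J"
    have finZ: "finite Z" unfolding Z_def using finP by simp
    have finK: "finite K" unfolding K_def using finZ finI finJ by simp
    have dpos': "(\<Sum>q\<in>P. acon g (Cpos r) q * z q) = z r" if "r \<in> P" for r z
    proof -
      have "(\<Sum>q\<in>P. acon g (Cpos r) q * z q) = (\<Sum>q\<in>P. if q = r then z q else 0)"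
        by (intro sum.cong) auto
      thus ?thesis using that finP by simp
    qed
    have dplus: "(\<Sum>q\<in>P. acon g (Cplus i) q * z q) = (\<Sum>p\<in>paths E (s i) (t i). z (i, p))" if "i \<in> I" for i z
    proof -
      have "(\<Sum>p\<in>paths E (s i') (t i'). acon g (Cplus i) (i', p) * z (i', p))
          = (if i' = i then (\<Sum>p\<in>paths E (s i) (t i). z (i, p)) else 0)" for i'
        by (cases "i' = i") auto
      thus ?thesis unfolding sumP using that finI by simp
    qed
    have dminus: "(\<Sum>q\<in>P. acon g (Cminus i) q * z q) = - (\<Sum>p\<in>paths E (s i) (t i). z (i, p))" if "i \<in> I" for i z
    proof -
      have "(\<Sum>p\<in>paths E (s i') (t i'). acon g (Cminus i) (i', p) * z (i', p))
          = (if i' = i then - (\<Sum>p\<in>paths E (s i) (t i). z (i, p)) else 0)" for i'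
        by (cases "i' = i") (auto simp: sum_negf)
      thus ?thesis unfolding sumP using that finI by simp
    qed
    have dbud: "(\<Sum>q\<in>P. acon g (Cbud j) q * z q) = - Gext P g j z" for j z
      unfolding Gext_def by (simp add: sum_negf)
    have hyp: "\<forall>z. (\<forall>k\<in>K. 0 \<le> (\<Sum>q\<in>P. acon g k q * z q)) \<longrightarrow> 0 \<le> (\<Sum>q\<in>P. \<tau> q x * z q)"
    proof (intro allI impI)
      fix z assume z: "\<forall>k\<in>K. 0 \<le> (\<Sum>q\<in>P. acon g k q * z q)"
      have zpos: "\<forall>q\<in>Z. 0 \<le> z q"
      proof
        fix q assume q: "q \<in> Z"
        hence "Cpos q \<in> K" unfolding K_def by auto
        hence "0 \<le> (\<Sum>r\<in>P. acon g (Cpos q) r * z r)" using z by blast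
        thus "0 \<le> z q" using dpos'[of q z] q unfolding Z_def by simp
      qed
      have zsum: "\<forall>i\<in>I. (\<Sum>p\<in>paths E (s i) (t i). z (i, p)) = 0"
      proof
        fix i assume i: "i \<in> I"
        have "Cplus i \<in> K" "Cminus i \<in> K" using i unfolding K_def by auto
        hence "0 \<le> (\<Sum>q\<in>P. acon g (Cplus i) q * z q)" "0 \<le> (\<Sum>q\<in>P. acon g (Cminus i) q * z q)"
          using z by blast+
        hence "0 \<le> (\<Sum>p\<in>paths E (s i) (t i). z (i, p))" "0 \<le> - (\<Sum>p\<in>paths E (s i) (t i). z (i, p))"
          using dplus[OF i] dminus[OF i] by simp_all
        thus "(\<Sum>p\<in>paths E (s i) (t i). z (i, p)) = 0" by linarith
      qed
      have zbud: "\<forall>j\<in>J. Gext P g j z \<le> 0"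
      proof
        fix j assume "j \<in> J"
        hence "Cbud j \<in> K" unfolding K_def by auto
        hence "0 \<le> (\<Sum>q\<in>P. acon g (Cbud j) q * z q)" using z by blast
        thus "Gext P g j z \<le> 0" using dbud by simp
      qed
      define u where "u = Min (insert 1 ((\<lambda>q. x q / (\<bar>z q\<bar> + 1)) ` {q\<in>P. 0 < x q}))"
      have finU: "finite (insert 1 ((\<lambda>q. x q / (\<bar>z q\<bar> + 1)) ` {q\<in>P. 0 < x q}))" using finP by simp
      have u0: "0 < u" unfolding u_def using finU
        by (subst Min_gr_iff) (auto intro!: divide_pos_pos)
      have ule: "u \<le> x q / (\<bar>z q\<bar> + 1)" if "q \<in> P" "0 < x q" for q
        unfolding u_def using finU that by (intro Min_le) auto
      define y where "y = (\<lambda>q. if q \<in> P then x q + u * z q else 0)"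
      have yfeas: "feasible_flow E I s t d y"
        unfolding feasible_flow_def P_def[symmetric]
      proof (intro conjI ballI)
        show "y \<in> vecs P" unfolding y_def vecs_def by simp
      next
        fix q assume q: "q \<in> P"
        show "0 \<le> y q"
        proof (cases "x q = 0")
          case True
          hence "q \<in> Z" unfolding Z_def using q by simp
          thus ?thesis using zpos u0 q True unfolding y_def by simp
        next
          case False
          hence xp: "0 < x q" using x0 q by force
          have "u * (\<bar>z q\<bar> + 1) \<le> x q" using ule[OF q xp] by (simp add: le_divide_eq add_pos_nonneg)
          moreover have "- (u * \<bar>z q\<bar>) \<le> u * z q" using u0 abs_ge_minus_self[of "u * z q"] by (simp add: abs_mult)
          ultimately show ?thesis using q u0 unfolding y_def by (simp add: algebra_simps)
        qed
      next
        fix i assume i: "i \<in> I"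
        have "(\<Sum>p\<in>paths E (s i) (t i). y (i, p)) = (\<Sum>p\<in>paths E (s i) (t i). x (i, p) + u * z (i, p))"
          using i inP unfolding y_def by (intro sum.cong) auto
        also have "\<dots> = d i" using xd zsum i by (simp add: sum.distrib sum_distrib_left[symmetric])
        finally show "(\<Sum>p\<in>paths E (s i) (t i). y (i, p)) = d i" .
      qed
      have yresp: "respects_budget E I s t J g B y"
        unfolding respects_budget_def P_def[symmetric]
      proof
        fix j assume j: "j \<in> J"
        have "Gext P g j y = (\<Sum>q\<in>P. g q j * x q + u * (g q j * z q))"
          unfolding Gext_def y_def by (intro sum.cong) (auto simp: algebra_simps)
        also have "\<dots> = Gext P g j x + u * Gext P g j z"
          unfolding Gext_def by (simp add: sum.distrib sum_distrib_left)
        also have "\<dots> \<le> B j + u * 0" using resp j zbud u0 unfolding respects_budget_def P_def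
          by (intro add_mono mult_left_mono) auto
        finally show "Gext P g j y \<le> B j" by simp
      qed
      have "0 \<le> (\<Sum>q\<in>P. \<tau> q x * (y q - x q))" using grad[OF yfeas yresp] .
      also have "(\<Sum>q\<in>P. \<tau> q x * (y q - x q)) = u * (\<Sum>q\<in>P. \<tau> q x * z q)"
        unfolding y_def by (simp add: sum_distrib_left mult_ac cong: sum.cong)
      finally show "0 \<le> (\<Sum>q\<in>P. \<tau> q x * z q)" using u0 by (simp add: zero_le_mult_iff)
    qed
    obtain l where l0: "\<forall>k\<in>K. 0 \<le> l k" and lc: "\<forall>q\<in>P. \<tau> q x = (\<Sum>k\<in>K. l k * acon g k q)"
      using farkas[OF finK finP hyp] by blast
    define lam where "lam = (\<lambda>j. l (Cbud j))"
    have costeq: "cost J \<tau> g lam q x = (if q \<in> Z then l (Cpos q) else 0) + l (Cplus (fst q)) - l (Cminus (fst q))"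
      if q: "q \<in> P" for q
    proof -
      have "fst q \<in> I" using q unfolding P_def Paths_def by auto
      thus ?thesis using lc q acon_decomp[OF finZ finI finJ, of q l g]
        unfolding cost_def lam_def K_def by simp
    qed
    have "WE E I s t d J \<tau> g lam x"
      unfolding WE_def
    proof (intro conjI x_feas ballI impI)
      fix i p p' assume i: "i \<in> I" and p: "p \<in> paths E (s i) (t i)" and xp: "0 < x (i, p)"
        and p': "p' \<in> paths E (s i) (t i)"
      have ip: "(i, p) \<in> P" and ip': "(i, p') \<in> P" using i p p' inP by auto
      have "(i, p) \<notin> Z" using xp unfolding Z_def by simp
      moreover have "0 \<le> (if (i, p') \<in> Z then l (Cpos (i, p')) else 0)" using l0 unfolding K_def by auto
      ultimately show "cost J \<tau> g lam (i, p) x \<le> cost J \<tau> g lam (i, p') x"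
        using costeq[OF ip] costeq[OF ip'] by simp
    qed
    moreover have "\<forall>j\<in>J. 0 \<le> lam j" using l0 unfolding lam_def K_def by auto
    ultimately show "implementable E I s t d J \<tau> g x \<and> respects_budget E I s t J g B x"
      unfolding implementable_def using resp by blast
  qed
qed

end
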